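(* Let $s\in\{-1,1\}$ and let $X$ be a hanging set on $J_s$. If $X$ is permeable, then $X$ is a dendrite.
   Context: $J=[-1,1]$, $J_s=J\times\{s\}$, $\stackrel{\circ}{J_s}=(-1,1)\times\{s\}$, $\partial J^2$ the boundary of the square $J^2$. For an arc $I$, $\stackrel{\circ}{I}$ (also $\mathrm{Int}\,I$) is $I$ minus its endpoints; for a disc $D$, $\stackrel{\circ}{D}$ is its interior, $\partial D$ its boundary circle. A hanging set on $J_s$ is a nonempty compact connected $X\subset J^2$ with $X\cap\partial J^2$ a nonempty connected subset of $\stackrel{\circ}{J_s}$. A hutch of $X$ is a disc $D\subset J^2$ which is a hanging set on $J_s$ with $D\cap\partial J^2$ an arc, such that $X\cap J_s\subset\mathrm{Int}(D\cap J_s)$ and $X-J_s\subset\stackrel{\circ}{D}$. $X$ is permeable if for some hutch $D$ of $X$, with $A=D\cap J_s$, there is a continuous $\eta:D\to D$ (a permeating) such that (C.1) $\eta|(\partial D-\stackrel{\circ}{A})=\mathrm{id}$, $\eta(A)=A\cup X$, and there is an arc $A'\subset\stackrel{\circ}{A}$ with $X\cap J_s\subset\mathrm{Int}\,A'$, $\eta(A-A')=A-(X\cap J_s)$, $\eta(A')=X$, $\eta|(A-A')$ injective; (C.2) $\eta(\stackrel{\circ}{D})=\stackrel{\circ}{D}-X$ and $\eta|\stackrel{\circ}{D}$ injective. A dendrite is a locally connected continuum containing no circle. *)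

theory Defs
  imports "HOL-Analysis.Analysis"
begin

text \<open>Points of the plane are pairs of reals (Euclidean norm on the product).\<close>

definition JJ :: "real set" where "JJ = {-1..1}"

definition square :: "(real \<times> real) set" where "square = JJ \<times> JJ"

definition bd_square :: "(real \<times> real) set" where "bd_square = frontier square"

definition Jside :: "real \<Rightarrow> (real \<times> real) set" where "Jside s = JJ \<times> {s}"

definition Jside_open :: "real \<Rightarrow> (real \<times> real) set" where
  "Jside_open s = {-1<..<1} \<times> {s}"

definition arc_ends :: "(real \<times> real) set \<Rightarrow> real \<times> real \<Rightarrow> real \<times> real \<Rightarrow> bool" where
  "arc_ends I a b \<longleftrightarrow> (\<exists>g. arc g \<and> path_image g = I \<and> pathstart g = a \<and> pathfinish g = b)"

definition is_arc :: "(real \<times> real) set \<Rightarrow> bool" where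
  "is_arc I \<longleftrightarrow> (\<exists>a b. arc_ends I a b)"

definition arc_interior :: "(real \<times> real) set \<Rightarrow> (real \<times> real) set" where
  "arc_interior I = {x \<in> I. \<forall>a b. arc_ends I a b \<longrightarrow> x \<noteq> a \<and> x \<noteq> b}"

text \<open>A disc: a set homeomorphic to the closed unit disc. Its interior and boundary circle
  are the topological interior and frontier in the plane.\<close>
definition is_disc :: "(real \<times> real) set \<Rightarrow> bool" where
  "is_disc D \<longleftrightarrow> D homeomorphic cball (0::real \<times> real) 1"

definition hanging_set :: "real \<Rightarrow> (real \<times> real) set \<Rightarrow> bool" where
  "hanging_set s X \<longleftrightarrow> X \<noteq> {} \<and> compact X \<and> connected X \<and> X \<subseteq> square \<and>
     X \<inter> bd_square \<noteq> {} \<and> connected (X \<inter> bd_square) \<and> X \<inter> bd_square \<subseteq> Jside_open s"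

definition hutch :: "real \<Rightarrow> (real \<times> real) set \<Rightarrow> (real \<times> real) set \<Rightarrow> bool" where
  "hutch s X D \<longleftrightarrow> is_disc D \<and> D \<subseteq> square \<and> hanging_set s D \<and> is_arc (D \<inter> bd_square) \<and>
     X \<inter> Jside s \<subseteq> arc_interior (D \<inter> Jside s) \<and> X - Jside s \<subseteq> interior D"

definition permeating :: "real \<Rightarrow> (real \<times> real) set \<Rightarrow> (real \<times> real) set
    \<Rightarrow> ((real \<times> real) \<Rightarrow> (real \<times> real)) \<Rightarrow> bool" where
  "permeating s X D \<eta> \<longleftrightarrow>
     (let A = D \<inter> Jside s in
       continuous_on D \<eta> \<and> \<eta> ` D \<subseteq> D \<and>
       \<comment> \<open>(C.1)\<close>
       (\<forall>x \<in> frontier D - arc_interior A. \<eta> x = x) \<and>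
       \<eta> ` A = A \<union> X \<and>
       (\<exists>A'. is_arc A' \<and> A' \<subseteq> arc_interior A \<and> X \<inter> Jside s \<subseteq> arc_interior A' \<and>
             \<eta> ` (A - A') = A - (X \<inter> Jside s) \<and> \<eta> ` A' = X \<and> inj_on \<eta> (A - A')) \<and>
       \<comment> \<open>(C.2)\<close>
       \<eta> ` interior D = interior D - X \<and> inj_on \<eta> (interior D))"

definition permeable :: "real \<Rightarrow> (real \<times> real) set \<Rightarrow> bool" where
  "permeable s X \<longleftrightarrow> (\<exists>D \<eta>. hutch s X D \<and> permeating s X D \<eta>)"

definition dendrite :: "(real \<times> real) set \<Rightarrow> bool" where
  "dendrite X \<longleftrightarrow> X \<noteq> {} \<and> compact X \<and> connected X \<and> locally connected X \<and>
     \<not> (\<exists>C \<subseteq> X. C homeomorphic sphere (0::real \<times> real) 1)"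

end

theory Submission
  imports Defs
begin

lemma disc_facts:
  assumes "is_disc D"
  shows "D \<subseteq> closure (interior D)" "connected (interior D)" "compact D" "connected (- D)"
proof -
  have hom: "cball (0::real\<times>real) 1 homeomorphic D"
    using assms unfolding is_disc_def by (rule homeomorphic_sym[THEN iffD1])
  then obtain h k where hk: "homeomorphism (cball (0::real\<times>real) 1) D h k"
    unfolding homeomorphic_def by blast
  have ch: "continuous_on (cball 0 1) h" and hD: "h ` cball 0 1 = D"
    using hk unfolding homeomorphism_def by auto
  have inj: "inj_on h (cball 0 1)"
    by (rule inj_on_inverseI[where g=k]) (use hk homeomorphism_apply1 in blast)
  have "open (h ` ball 0 1)"
    by (rule invariance_of_domain[OF continuous_on_subset[OF ch ball_subset_cball] open_ball inj_on_subset[OF inj ball_subset_cball]])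
  moreover have "h ` ball 0 1 \<subseteq> D" using hD ball_subset_cball by blast
  ultimately have sub: "h ` ball 0 1 \<subseteq> interior D" by (simp add: interior_maximal)
  have "D = h ` closure (ball 0 1)" using hD by simp
  also have "\<dots> \<subseteq> closure (h ` ball 0 1)"
    by (rule continuous_image_closure_subset[OF ch]) simp
  finally have D1: "D \<subseteq> closure (h ` ball 0 1)" .
  then show "D \<subseteq> closure (interior D)" using sub closure_mono by blast
  have "connected (h ` ball 0 1)"
    by (rule connected_continuous_image[OF continuous_on_subset[OF ch ball_subset_cball] connected_ball])
  moreover have "interior D \<subseteq> closure (h ` ball 0 1)" using D1 interior_subset[of D] by blast
  ultimately show "connected (interior D)"
    using connected_intermediate_closure sub by blast
  show "compact D" using hD ch compact_continuous_image compact_cball by metis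
  show "connected (- D)"
    by (rule connected_complement_homeomorphic_convex_compact[of D "cball (0::real\<times>real) 1"])
      (use assms in \<open>simp_all add: is_disc_def\<close>)
qed

lemma permeating_parts:
  assumes "permeating s X D \<eta>"
  shows "continuous_on D \<eta>" and "\<eta> ` D \<subseteq> D" and "\<eta> ` interior D = interior D - X"
    and "\<exists>A'. is_arc A' \<and> A' \<subseteq> arc_interior (D \<inter> Jside s) \<and> \<eta> ` A' = X"
proof -
  have P: "continuous_on D \<eta> \<and> \<eta> ` D \<subseteq> D \<and>
       (\<forall>x \<in> frontier D - arc_interior (D \<inter> Jside s). \<eta> x = x) \<and>
       \<eta> ` (D \<inter> Jside s) = (D \<inter> Jside s) \<union> X \<and>
       (\<exists>A'. is_arc A' \<and> A' \<subseteq> arc_interior (D \<inter> Jside s) \<and> X \<inter> Jside s \<subseteq> arc_interior A' \<and>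
             \<eta> ` ((D \<inter> Jside s) - A') = (D \<inter> Jside s) - (X \<inter> Jside s) \<and> \<eta> ` A' = X \<and> inj_on \<eta> ((D \<inter> Jside s) - A')) \<and>
       \<eta> ` interior D = interior D - X \<and> inj_on \<eta> (interior D)"
    using assms unfolding permeating_def Let_def .
  show "continuous_on D \<eta>" by (rule P[THEN conjunct1])
  show "\<eta> ` D \<subseteq> D" by (rule P[THEN conjunct2, THEN conjunct1])
  show "\<eta> ` interior D = interior D - X"
    by (rule P[THEN conjunct2, THEN conjunct2, THEN conjunct2, THEN conjunct2, THEN conjunct2, THEN conjunct1])
  have E: "\<exists>A'. is_arc A' \<and> A' \<subseteq> arc_interior (D \<inter> Jside s) \<and> X \<inter> Jside s \<subseteq> arc_interior A' \<and>
             \<eta> ` ((D \<inter> Jside s) - A') = (D \<inter> Jside s) - (X \<inter> Jside s) \<and> \<eta> ` A' = X \<and> inj_on \<eta> ((D \<inter> Jside s) - A')"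
    by (rule P[THEN conjunct2, THEN conjunct2, THEN conjunct2, THEN conjunct2, THEN conjunct1])
  then obtain A' where H: "is_arc A' \<and> A' \<subseteq> arc_interior (D \<inter> Jside s) \<and> X \<inter> Jside s \<subseteq> arc_interior A' \<and>
             \<eta> ` ((D \<inter> Jside s) - A') = (D \<inter> Jside s) - (X \<inter> Jside s) \<and> \<eta> ` A' = X \<and> inj_on \<eta> ((D \<inter> Jside s) - A')"
    by (rule exE)
  show "\<exists>A'. is_arc A' \<and> A' \<subseteq> arc_interior (D \<inter> Jside s) \<and> \<eta> ` A' = X"
    by (rule exI[where x=A'], intro conjI, rule H[THEN conjunct1], rule H[THEN conjunct2, THEN conjunct1],
        rule H[THEN conjunct2, THEN conjunct2, THEN conjunct2, THEN conjunct2, THEN conjunct1])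
qed

lemma hutch_parts:
  assumes "hutch s X D"
  shows "is_disc D" "D \<subseteq> square" "X - Jside s \<subseteq> interior D"
proof -
  have P: "is_disc D \<and> D \<subseteq> square \<and> hanging_set s D \<and> is_arc (D \<inter> bd_square) \<and>
     X \<inter> Jside s \<subseteq> arc_interior (D \<inter> Jside s) \<and> X - Jside s \<subseteq> interior D"
    using assms unfolding hutch_def .
  show "is_disc D" by (rule P[THEN conjunct1])
  show "D \<subseteq> square" by (rule P[THEN conjunct2, THEN conjunct1])
  show "X - Jside s \<subseteq> interior D" by (rule P[THEN conjunct2, THEN conjunct2, THEN conjunct2, THEN conjunct2, THEN conjunct2])
qed

theorem proposition4p5:
  fixes s :: real and X :: "(real \<times> real) set"
  assumes "s \<in> {-1, 1}"
    and "hanging_set s X"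
    and "permeable s X"
  shows "dendrite X"
proof -
  obtain D \<eta> where hut: "hutch s X D" and per: "permeating s X D \<eta>"
    using assms(3) unfolding permeable_def by blast
  define A where "A = D \<inter> Jside s"
  have disc: "is_disc D" and Dsq: "D \<subseteq> square" and XJ: "X - Jside s \<subseteq> interior D"
    using hutch_parts[OF hut] by simp_all
  have c\<eta>: "continuous_on D \<eta>" and \<eta>D: "\<eta> ` D \<subseteq> D"
    and \<eta>int: "\<eta> ` interior D = interior D - X"
    using permeating_parts[OF per] by simp_all
  obtain A' where arcA': "is_arc A'" and A'sub: "A' \<subseteq> arc_interior A" and XA': "\<eta> ` A' = X"
    using permeating_parts(4)[OF per] unfolding A_def by blast
  have A'D: "A' \<subseteq> D" using A'sub unfolding arc_interior_def A_def by blast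
  have XD: "X \<subseteq> D" using XA' A'D \<eta>D by blast
  have Xne: "X \<noteq> {}" and Xc: "compact X" and Xconn: "connected X"
    using assms(2) unfolding hanging_set_def by blast+
  note df = disc_facts[OF disc]
  have s01: "s = -1 \<or> s = 1" using assms(1) by auto
  obtain g a b where g: "arc g" "path_image g = A'"
    using arcA' unfolding is_arc_def arc_ends_def by blast
  have cg: "continuous_on {0..1} g" using g(1) arc_imp_path path_def by blast
  have gA: "g ` {0..1} = A'" using g(2) by (simp add: path_image_def)
  have cc: "continuous_on {0..1} (\<eta> \<circ> g)"
    by (rule continuous_on_compose[OF cg]) (use c\<eta> gA A'D continuous_on_subset in auto)
  have Xim: "(\<eta> \<circ> g) ` {0..1} = X" using gA XA' by (metis image_comp)
  have lc: "locally connected X"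
  proof -
    have "locally connected ((\<eta> \<circ> g) ` {0..1::real})"
    proof (rule locally_connected_quotient_image)
      show "locally connected {0..1::real}" by (simp add: convex_imp_locally_connected)
      fix T assume "T \<subseteq> (\<eta> \<circ> g) ` {0..1::real}"
      then show "openin (top_of_set {0..1}) ({0..1} \<inter> (\<eta> \<circ> g) -` T) \<longleftrightarrow>
                 openin (top_of_set ((\<eta> \<circ> g) ` {0..1})) T"
        by (rule Abstract_Topology_2.continuous_imp_quotient_map[OF cc refl compact_Icc])
    qed
    then show ?thesis using Xim by simp
  qed
  have Xcl: "X \<subseteq> closure (interior D - X)"
  proof -
    have cD: "closure (interior D) \<subseteq> D"
      using df(3) compact_imp_closed closure_minimal interior_subset by blast
    have "X \<subseteq> \<eta> ` D" using XA' A'D by auto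
    also have "\<dots> \<subseteq> \<eta> ` closure (interior D)" using df(1) by auto
    also have "\<dots> \<subseteq> closure (\<eta> ` interior D)"
      by (rule continuous_image_closure_subset[OF c\<eta> cD])
    finally show ?thesis using \<eta>int by simp
  qed
  have noint: "\<exists>y\<in>V0. y \<notin> X" if "open V0" "V0 \<noteq> {}" for V0
  proof (rule ccontr)
    assume "\<not> ?thesis"
    then have OX: "V0 \<subseteq> X" by auto
    have "V0 \<inter> closure (interior D - X) \<noteq> {}" using OX Xcl that(2) by blast
    then have "V0 \<inter> (interior D - X) \<noteq> {}" using open_Int_closure_eq_empty[OF that(1)] by blast
    then show False using OX by blast
  qed
  have nocirc: False if CX: "C \<subseteq> X" and Chom: "C homeomorphic sphere (0::real\<times>real) 1" for C
  proof -
    have Ccomp: "compact C" using Chom homeomorphic_compactness compact_sphere by blast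
    have oC: "open (- C)" using Ccomp compact_imp_closed by blast
    have nc: "\<not> connected (- C)" using Jordan_Brouwer_separation[OF Chom] by simp
    have "- D \<noteq> {}"
    proof
      assume "- D = {}" then have "D = UNIV" by auto
      then show False using df(3) compact_imp_bounded not_bounded_UNIV by metis
    qed
    then obtain q where q: "q \<in> - D" by blast
    have CD: "C \<subseteq> D" using CX XD by auto
    define W where "W = connected_component_set (- C) q"
    have DW: "- D \<subseteq> W" unfolding W_def
      by (rule connected_component_maximal) (use q df(4) CD in auto)
    obtain p where p: "p \<in> - C" "p \<notin> W"
    proof -
      have "\<not> (- C \<subseteq> W)"
      proof
        assume "- C \<subseteq> W"
        then have "- C = W" unfolding W_def using connected_component_subset by blast
        then show False using nc W_def connected_connected_component by metis
      qed
      then show ?thesis using that by blast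
    qed
    define U where "U = connected_component_set (- C) p"
    have qC: "q \<in> - C" using q CD by auto
    have Ucomp: "U \<in> components (- C)" unfolding U_def using p(1) componentsI by blast
    have Wcomp: "W \<in> components (- C)" unfolding W_def using qC componentsI by blast
    have pU: "p \<in> U" unfolding U_def using p(1) by simp
    have UW: "U \<inter> W = {}"
      using components_nonoverlap[OF Ucomp Wcomp] pU p(2) by blast
    have UD: "U \<subseteq> D" using UW DW by blast
    have oU: "open U" unfolding U_def using oC open_connected_component by blast
    have UiD: "U \<subseteq> interior D" using UD oU interior_maximal by blast
    have fU: "frontier U = C" by (rule Jordan_Brouwer_frontier[OF Chom Ucomp]) simp
    have fW: "frontier W = C" by (rule Jordan_Brouwer_frontier[OF Chom Wcomp]) simp
    show False
    proof (cases "C \<inter> interior D = {}")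
      case False
      then obtain c where c: "c \<in> C" "c \<in> interior D" by blast
      have "c \<in> closure W" using c(1) fW frontier_def by blast
      then have "interior D \<inter> W \<noteq> {}"
        using open_Int_closure_eq_empty[of "interior D" W] c(2) by blast
      moreover have "open (interior D \<inter> W)"
        using oC open_connected_component W_def by auto
      ultimately obtain w where w: "w \<in> interior D" "w \<in> W" "w \<notin> X"
        using noint by blast
      obtain u where u: "u \<in> U" "u \<notin> X" using noint[OF oU] pU by blast
      have conn: "connected (interior D - X)"
        unfolding \<eta>int[symmetric]
        by (rule connected_continuous_image[OF continuous_on_subset[OF c\<eta> interior_subset] df(2)])
      have sub: "interior D - X \<subseteq> - C" using CX by auto
      have "U = W"
        by (rule joinable_components_eq[of "interior D - X" "- C"])
          (use conn sub Ucomp Wcomp u UiD w in auto)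
      then show False using UW pU by blast
    next
      case True
      have CJ: "C \<subseteq> Jside s" using True CX XJ by blast
      define B where "B = {-1<..<(1::real)} \<times> {-1<..<(1::real)}"
      have iS: "interior square = B"
        unfolding B_def square_def JJ_def interior_Times by simp
      have UB: "U \<subseteq> B" using UiD interior_mono[OF Dsq] iS by blast
      have CB: "C \<inter> B = {}" using CJ s01 unfolding Jside_def B_def by auto
      have cB: "connected B" unfolding B_def by (intro connected_Times) auto
      have clB: "closure B = {-1..1} \<times> {-1..1}"
        unfolding B_def closure_Times by simp
      have op: "openin (top_of_set B) U" using oU UB by (simp add: open_subset)
      have "B \<inter> closure U = U"
        using closure_Un_frontier[of U] fU CB UB by auto
      then have cl: "closedin (top_of_set B) U"
        by (metis closedin_closed closed_closure)
      have "U = B" using cB op cl pU unfolding connected_clopen by blast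
      then have "frontier B = C" using fU by simp
      moreover have "(0, -s) \<in> frontier B"
        using s01 clB unfolding frontier_def B_def interior_open[OF open_Times[OF open_greaterThanLessThan open_greaterThanLessThan]]
        by auto
      ultimately have "(0, -s) \<in> Jside s" using CJ by blast
      then show False using s01 unfolding Jside_def by auto
    qed
  qed
  have "\<not> (\<exists>C \<subseteq> X. C homeomorphic sphere (0::real \<times> real) 1)"
    using nocirc by blast
  then show ?thesis
    unfolding dendrite_def using Xne Xc Xconn lc by simp
qed

end
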